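(* Let $A$ be a countable set. Then it is possible to assign to each $a\subseteq A$ sequences $y_a\in\ell^2$ and $w_a\in\{1,2\}^\omega$ such that (1) for all $a,b\subseteq A$, $y_a\in\mathsf{HC}(w_b)$ if and only if $b\not\subseteq a$; and (2) the maps $a\mapsto y_a$ and $a\mapsto w_a$ are homeomorphisms between $2^A$ and their ranges (with $\ell^2$ carrying its norm topology and $\{1,2\}^\omega$ the product topology).
   Context: $\omega=\{0,1,2,\dots\}$. Subsets of $A$ are identified with their characteristic functions in $2^A$, which carries the product of discrete topologies. $\ell^2$ is the Hilbert space of square-summable real sequences indexed by $\omega$. For $w\in\{1,2\}^\omega$, $B_w:\ell^2\to\ell^2$ is $B_w(x)(i)=w(i)\,x(i+1)$, and $\mathsf{HC}(w)$ is the set of $x\in\ell^2$ such that $\{B_w^k(x):k\in\omega\}$ is dense in $\ell^2$. *)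

theory Defs
  imports "HOL-Analysis.Analysis"
begin

definition l2 :: "(nat \<Rightarrow> real) set" where
  "l2 = {x. summable (\<lambda>i. (x i)\<^sup>2)}"

definition l2_norm :: "(nat \<Rightarrow> real) \<Rightarrow> real" where
  "l2_norm x = sqrt (\<Sum>i. (x i)\<^sup>2)"

definition l2_open :: "(nat \<Rightarrow> real) set \<Rightarrow> bool" where
  "l2_open U \<longleftrightarrow> U \<subseteq> l2 \<and>
     (\<forall>x\<in>U. \<exists>e>0. \<forall>z\<in>l2. l2_norm (\<lambda>i. z i - x i) < e \<longrightarrow> z \<in> U)"

lemma istopology_l2_open: "istopology l2_open"
  unfolding istopology_def
proof (intro conjI allI impI)
  fix S T assume S: "l2_open S" and T: "l2_open T"
  show "l2_open (S \<inter> T)"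
    unfolding l2_open_def
  proof (intro conjI ballI)
    show "S \<inter> T \<subseteq> l2" using S unfolding l2_open_def by blast
  next
    fix x assume x: "x \<in> S \<inter> T"
    obtain e1 where e1: "e1 > 0" "\<forall>z\<in>l2. l2_norm (\<lambda>i. z i - x i) < e1 \<longrightarrow> z \<in> S"
      using S x unfolding l2_open_def by blast
    obtain e2 where e2: "e2 > 0" "\<forall>z\<in>l2. l2_norm (\<lambda>i. z i - x i) < e2 \<longrightarrow> z \<in> T"
      using T x unfolding l2_open_def by blast
    show "\<exists>e>0. \<forall>z\<in>l2. l2_norm (\<lambda>i. z i - x i) < e \<longrightarrow> z \<in> S \<inter> T"
      using e1 e2 by (intro exI[of _ "min e1 e2"]) auto
  qed
next
  fix K assume K: "\<forall>S\<in>K. l2_open S"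
  show "l2_open (\<Union>K)"
    unfolding l2_open_def
  proof (intro conjI ballI)
    show "\<Union>K \<subseteq> l2" using K unfolding l2_open_def by blast
  next
    fix x assume "x \<in> \<Union>K"
    then obtain S where S: "S \<in> K" "x \<in> S" by blast
    then obtain e where "e > 0" "\<forall>z\<in>l2. l2_norm (\<lambda>i. z i - x i) < e \<longrightarrow> z \<in> S"
      using K unfolding l2_open_def by blast
    then show "\<exists>e>0. \<forall>z\<in>l2. l2_norm (\<lambda>i. z i - x i) < e \<longrightarrow> z \<in> \<Union>K"
      using S by blast
  qed
qed

definition l2_top :: "(nat \<Rightarrow> real) topology" where
  "l2_top = topology l2_open"

definition bshift :: "(nat \<Rightarrow> nat) \<Rightarrow> (nat \<Rightarrow> real) \<Rightarrow> (nat \<Rightarrow> real)" where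
  "bshift w x = (\<lambda>i. real (w i) * x (Suc i))"

definition HC :: "(nat \<Rightarrow> nat) \<Rightarrow> (nat \<Rightarrow> real) set" where
  "HC w = {x \<in> l2. l2_top closure_of {(bshift w ^^ k) x | k. True} = l2}"

definition weight_top :: "(nat \<Rightarrow> nat) topology" where
  "weight_top = product_topology (\<lambda>_. discrete_topology {1,2}) UNIV"

text \<open>The Cantor space 2^A: characteristic functions A -> bool (extensional,
  i.e. undefined outside A) with the product of discrete topologies.\<close>

definition cantor_top :: "'a set \<Rightarrow> ('a \<Rightarrow> bool) topology" where
  "cantor_top A = product_topology (\<lambda>_. discrete_topology UNIV) A"

definition set_of_char :: "'a set \<Rightarrow> ('a \<Rightarrow> bool) \<Rightarrow> 'a set" where
  "set_of_char A c = {x \<in> A. c x}"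

end

theory Submission
  imports Defs
begin


lemma openin_l2: "openin l2_top U \<longleftrightarrow> l2_open U"
  by (simp add: l2_top_def istopology_l2_open)

lemma topspace_l2: "topspace l2_top = l2"
proof -
  have "l2_open l2" unfolding l2_open_def by (auto intro: exI[of _ 1])
  then have "openin l2_top l2" by (simp add: openin_l2)
  then have "l2 \<subseteq> topspace l2_top" by (rule openin_subset)
  moreover have "topspace l2_top \<subseteq> l2"
  proof
    fix x assume "x \<in> topspace l2_top"
    then obtain U where "openin l2_top U" "x \<in> U" unfolding topspace_def by blast
    then show "x \<in> l2" by (auto simp: openin_l2 l2_open_def)
  qed
  ultimately show ?thesis by (rule antisym[rotated])
qed

lemma summable_le_nonneg:
  fixes f g :: "nat \<Rightarrow> real"
  assumes "\<And>i. 0 \<le> f i" "\<And>i. f i \<le> g i" "summable g" shows "summable f"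
  by (rule summable_comparison_test[of f g]) (use assms in auto)

lemma l2_diff: assumes "x \<in> l2" "z \<in> l2" shows "(\<lambda>i. z i - x i) \<in> l2"
proof -
  have S: "summable (\<lambda>i. 2 * (z i)\<^sup>2 + 2 * (x i)\<^sup>2)"
    using assms unfolding l2_def by (intro summable_add summable_mult) auto
  have B: "(z i - x i)\<^sup>2 \<le> 2 * (z i)\<^sup>2 + 2 * (x i)\<^sup>2" for i
  proof -
    have "(z i - x i)\<^sup>2 = 2 * (z i)\<^sup>2 + 2 * (x i)\<^sup>2 - (z i + x i)\<^sup>2"
      by (simp add: power2_eq_square algebra_simps)
    moreover have "0 \<le> (z i + x i)\<^sup>2" by simp
    ultimately show ?thesis by linarith
  qed
  have "summable (\<lambda>i. (z i - x i)\<^sup>2)"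
    by (rule summable_le_nonneg[of _ "\<lambda>i. 2 * (z i)\<^sup>2 + 2 * (x i)\<^sup>2", OF _ B S]) simp
  then show ?thesis unfolding l2_def by simp
qed

lemma coord_le_l2_norm: assumes "x \<in> l2" shows "\<bar>x i\<bar> \<le> l2_norm x"
proof -
  have s: "summable (\<lambda>i. (x i)\<^sup>2)" using assms l2_def by auto
  have "(\<Sum>j\<in>{i}. (x j)\<^sup>2) \<le> (\<Sum>j. (x j)\<^sup>2)"
    by (rule sum_le_suminf[OF s]) auto
  then have "(x i)\<^sup>2 \<le> (\<Sum>j. (x j)\<^sup>2)" by simp
  then have "sqrt ((x i)\<^sup>2) \<le> sqrt (\<Sum>j. (x j)\<^sup>2)" by (rule real_sqrt_le_mono)
  then show ?thesis unfolding l2_norm_def by simp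
qed

lemma coord_open: "l2_open {z \<in> l2. \<bar>z i - c\<bar> < r}"
  unfolding l2_open_def
proof (intro conjI ballI)
  fix x assume x: "x \<in> {z \<in> l2. \<bar>z i - c\<bar> < r}"
  show "\<exists>e>0. \<forall>z\<in>l2. l2_norm (\<lambda>i. z i - x i) < e \<longrightarrow> z \<in> {z \<in> l2. \<bar>z i - c\<bar> < r}"
  proof (intro exI[of _ "r - \<bar>x i - c\<bar>"] conjI ballI impI)
    show "0 < r - \<bar>x i - c\<bar>" using x by auto
    fix z assume z: "z \<in> l2" "l2_norm (\<lambda>i. z i - x i) < r - \<bar>x i - c\<bar>"
    have "\<bar>z i - x i\<bar> \<le> l2_norm (\<lambda>i. z i - x i)"
      using coord_le_l2_norm[OF l2_diff[of x z]] x z by auto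
    then show "z \<in> {z \<in> l2. \<bar>z i - c\<bar> < r}" using z by auto
  qed
qed auto

lemma Hausdorff_l2: "Hausdorff_space l2_top"
  unfolding Hausdorff_space_def topspace_l2
proof (intro allI impI)
  fix x y assume H: "x \<in> l2 \<and> y \<in> l2 \<and> x \<noteq> y"
  then obtain i where i: "x i \<noteq> y i" by auto
  define r where "r = \<bar>x i - y i\<bar> / 2"
  have r: "r > 0" using i r_def by auto
  show "\<exists>U V. openin l2_top U \<and> openin l2_top V \<and> x \<in> U \<and> y \<in> V \<and> disjnt U V"
  proof (intro exI conjI)
    show "openin l2_top {z \<in> l2. \<bar>z i - x i\<bar> < r}" "openin l2_top {z \<in> l2. \<bar>z i - y i\<bar> < r}"
      using coord_open openin_l2 by auto
    show "x \<in> {z \<in> l2. \<bar>z i - x i\<bar> < r}" "y \<in> {z \<in> l2. \<bar>z i - y i\<bar> < r}" using H r by auto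
    show "disjnt {z \<in> l2. \<bar>z i - x i\<bar> < r} {z \<in> l2. \<bar>z i - y i\<bar> < r}"
    proof -
      have "False" if "\<bar>a - x i\<bar> < \<bar>x i - y i\<bar> / 2" "\<bar>a - y i\<bar> < \<bar>x i - y i\<bar> / 2" for a :: real
        using that abs_triangle_ineq4[of "a - x i" "a - y i"] abs_minus_commute[of "x i" "y i"] by simp
      then show ?thesis unfolding disjnt_def r_def by blast
    qed
  qed
qed

lemma closure_l2I:
  assumes "\<And>x e. x \<in> l2 \<Longrightarrow> e > 0 \<Longrightarrow> \<exists>z\<in>S. z \<in> l2 \<and> l2_norm (\<lambda>i. z i - x i) < e"
  shows "l2_top closure_of S = l2"
proof
  show "l2_top closure_of S \<subseteq> l2" using closure_of_subset_topspace[of l2_top S] unfolding topspace_l2 .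
  show "l2 \<subseteq> l2_top closure_of S"
  proof
    fix x assume x: "x \<in> l2"
    show "x \<in> l2_top closure_of S"
      unfolding in_closure_of topspace_l2
    proof (intro conjI allI impI x)
      fix T assume T: "x \<in> T \<and> openin l2_top T"
      then obtain e where e: "e > 0" "\<forall>z\<in>l2. l2_norm (\<lambda>i. z i - x i) < e \<longrightarrow> z \<in> T"
        unfolding openin_l2 l2_open_def by blast
      then obtain z where "z \<in> S" "z \<in> l2" "l2_norm (\<lambda>i. z i - x i) < e" using assms x by blast
      then show "\<exists>y. y \<in> S \<and> y \<in> T" using e by blast
    qed
  qed
qed

lemma closure_l2_not:
  assumes "\<And>z. z \<in> S \<Longrightarrow> \<bar>z 0\<bar> \<le> 1"
  shows "l2_top closure_of S \<noteq> l2"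
proof
  assume eq: "l2_top closure_of S = l2"
  define x :: "nat \<Rightarrow> real" where "x = (\<lambda>i. if i = 0 then 3 else 0)"
  have "summable (\<lambda>i. (x i)\<^sup>2)"
  proof (rule summable_finite[of "{0}"]) qed (auto simp: x_def)
  then have "x \<in> l2" unfolding l2_def by auto
  then have "x \<in> l2_top closure_of S" using eq by auto
  moreover have "openin l2_top {z \<in> l2. \<bar>z 0 - 3\<bar> < 1}" using coord_open openin_l2 by auto
  moreover have "x \<in> {z \<in> l2. \<bar>z 0 - 3\<bar> < 1}" using \<open>x \<in> l2\<close> by (auto simp: x_def)
  ultimately have "\<exists>y. y \<in> S \<and> y \<in> {z \<in> l2. \<bar>z 0 - 3\<bar> < 1}"
    unfolding in_closure_of by (elim conjE allE[of _ "{z \<in> l2. \<bar>z 0 - 3\<bar> < 1}"]) simp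
  then obtain z where "z \<in> S" "\<bar>z 0 - 3\<bar> < 1" by blast
  then show False using assms[of z] by linarith
qed

lemma bshift_pow: "(bshift w ^^ k) x i = (\<Prod>j\<in>{i..<i+k}. real (w j)) * x (i + k)"
proof (induction k arbitrary: x i)
  case 0 then show ?case by simp
next
  case (Suc k)
  have "(bshift w ^^ Suc k) x i = (bshift w ^^ k) (bshift w x) i"
    by (simp only: funpow_Suc_right comp_def)
  also have "\<dots> = (\<Prod>j\<in>{i..<i+k}. real (w j)) * bshift w x (i + k)"
    by (rule Suc.IH)
  also have "\<dots> = (\<Prod>j\<in>{i..<i+k}. real (w j)) * (real (w (i+k)) * x (Suc (i + k)))"
    by (simp add: bshift_def)
  also have "\<dots> = (\<Prod>j\<in>{i..<i+Suc k}. real (w j)) * x (i + Suc k)"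
    by (simp add: prod.atLeastLessThan_Suc)
  finally show ?case .
qed

lemma bshift_l2: assumes "\<And>j. w j \<le> 2" "x \<in> l2" shows "(bshift w ^^ k) x \<in> l2"
proof (induction k)
  case 0 then show ?case using assms by simp
next
  case (Suc k)
  define u where "u = (bshift w ^^ k) x"
  have "summable (\<lambda>i. 4 * (u (Suc i))\<^sup>2)"
    using Suc unfolding u_def l2_def by (subst summable_Suc_iff) (auto intro: summable_mult)
  moreover have "norm ((real (w i) * u (Suc i))\<^sup>2) \<le> 4 * (u (Suc i))\<^sup>2" for i
  proof -
    have "real (w i) \<le> 2" using assms(1)[of i] by simp
    then have "(real (w i))\<^sup>2 \<le> 2\<^sup>2" by (intro power_mono) auto
    then show ?thesis by (simp add: power_mult_distrib mult_right_mono)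
  qed
  ultimately have "summable (\<lambda>i. (real (w i) * u (Suc i))\<^sup>2)"
    by (intro summable_comparison_test[of "\<lambda>i. (real (w i) * u (Suc i))\<^sup>2" "\<lambda>i. 4 * (u (Suc i))\<^sup>2"]) auto
  then have "bshift w u \<in> l2" unfolding l2_def bshift_def by simp
  then show ?case by (simp add: u_def)
qed



definition nn :: "nat \<Rightarrow> nat" where "nn t = fst (prod_decode (snd (prod_decode t)))"
definition qq :: "nat \<Rightarrow> rat list" where "qq t = from_nat (snd (prod_decode (snd (prod_decode t))))"
definition LL :: "nat \<Rightarrow> nat" where "LL t = length (qq t)"
definition qv :: "nat \<Rightarrow> nat \<Rightarrow> real" where "qv t i = real_of_rat (qq t ! i)"
definition MM :: "nat \<Rightarrow> nat" where "MM t = nat \<lceil>\<Sum>i<LL t. \<bar>qv t i\<bar>\<rceil>"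
primrec PP :: "nat \<Rightarrow> nat" where
  "PP 0 = 0"
| "PP (Suc t) = PP t + 2 * (PP t + t + MM t + 1) + LL t"
definition RR :: "nat \<Rightarrow> nat" where "RR t = PP t + t + MM t + 1"
definition TT :: "nat \<Rightarrow> nat" where "TT t = (\<Sum>u<t. RR u)"
definition QQ :: "nat \<Rightarrow> nat" where "QQ t = PP t + RR t + LL t"
definition stg :: "nat \<Rightarrow> nat" where "stg p = (LEAST t. p < PP (Suc t))"

lemma PP_Suc': "PP (Suc t) = QQ t + RR t"
  by (simp add: QQ_def RR_def)

declare PP.simps(2)[simp del]

lemma RR_pos: "1 \<le> RR t" by (simp add: RR_def)

lemma PP_less: "PP t < PP (Suc t)" using RR_pos[of t] by (simp add: PP_Suc' QQ_def)

lemma PP_mono: "t \<le> u \<Longrightarrow> PP t \<le> PP u"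
  by (rule lift_Suc_mono_le[of PP]) (use PP_less less_imp_le in auto)

lemma PP_ge: "t \<le> PP t"
  by (induction t) (auto simp: PP.simps(2))

lemma QQ_less: "QQ t < PP (Suc t)" using RR_pos[of t] unfolding PP_Suc' by linarith

lemma QQ_ge: "PP t + RR t \<le> QQ t" by (simp add: QQ_def)

lemma QQ_strict: "QQ t < QQ (Suc t)"
  using QQ_less[of t] QQ_ge[of "Suc t"] by linarith

lemma stg_eq: assumes "PP t \<le> p" "p < PP (Suc t)" shows "stg p = t"
  unfolding stg_def
proof (rule Least_equality)
  show "p < PP (Suc t)" by fact
  fix y assume y: "p < PP (Suc y)"
  show "t \<le> y"
  proof (rule ccontr)
    assume "\<not> t \<le> y"
    then have "PP (Suc y) \<le> PP t" by (intro PP_mono) auto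
    then show False using y assms by linarith
  qed
qed

lemma stg_bounds: "PP (stg p) \<le> p \<and> p < PP (Suc (stg p))"
proof -
  have ex: "p < PP (Suc p)" using PP_ge[of p] PP_less[of p] by linarith
  have 1: "p < PP (Suc (stg p))" unfolding stg_def by (rule LeastI[of _ p]) (rule ex)
  have 2: "PP (stg p) \<le> p"
  proof (cases "stg p")
    case 0 then show ?thesis by simp
  next
    case (Suc u)
    then have "u < stg p" by simp
    then have "\<not> p < PP (Suc u)" unfolding stg_def by (rule not_less_Least)
    then show ?thesis using Suc by simp
  qed
  show ?thesis using 1 2 by simp
qed

lemma stg_le: assumes "p < PP (Suc K)" shows "stg p \<le> K"
proof (rule ccontr)
  assume "\<not> stg p \<le> K"
  then have "PP (Suc K) \<le> PP (stg p)" by (intro PP_mono) auto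
  then show False using stg_bounds[of p] assms by linarith
qed

definition wS :: "nat set \<Rightarrow> nat \<Rightarrow> nat" where
  "wS S j = (let t = stg j in
      if j < PP t + RR t then (if nn t \<in> S then 2 else 1)
      else if j < QQ t then 1 else (if nn t \<in> S then 1 else 2))"

lemma wS_12: "wS S j \<in> {1, 2}"
  unfolding wS_def Let_def by auto

lemma wS_le2: "wS S j \<le> 2"
  using wS_12[of S j] by auto

lemma wS_ge1: "1 \<le> real (wS S j)"
  using wS_12[of S j] by auto

lemma wS_H1: assumes "PP t \<le> j" "j < PP t + RR t" shows "real (wS S j) = (if nn t \<in> S then 2 else 1)"
proof -
  have "stg j = t" using assms QQ_ge[of t] QQ_less[of t] by (intro stg_eq) auto
  then show ?thesis using assms by (simp add: wS_def Let_def)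
qed

lemma wS_C: assumes "PP t + RR t \<le> j" "j < QQ t" shows "real (wS S j) = 1"
proof -
  have "stg j = t" using assms QQ_ge[of t] QQ_less[of t] by (intro stg_eq) auto
  then show ?thesis using assms by (simp add: wS_def Let_def)
qed

lemma wS_H2: assumes "QQ t \<le> j" "j < PP (Suc t)" shows "real (wS S j) = (if nn t \<in> S then 1 else 2)"
proof -
  have "stg j = t" using assms QQ_ge[of t] QQ_less[of t] by (intro stg_eq) auto
  then show ?thesis using assms QQ_ge[of t] by (simp add: wS_def Let_def)
qed

lemma prod_split: fixes m n :: nat shows "m \<le> n \<Longrightarrow> (\<Prod>j<n. f j) = (\<Prod>j<m. f j) * (\<Prod>j\<in>{m..<n}. (f j :: real))"
  using prod.atLeastLessThan_concat[of 0 m n f] by (simp add: atLeast0LessThan)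

lemma prod_split2: fixes a m n :: nat shows "a \<le> m \<Longrightarrow> m \<le> n \<Longrightarrow> (\<Prod>j\<in>{a..<n}. f j) = (\<Prod>j\<in>{a..<m}. f j) * (\<Prod>j\<in>{m..<n}. (f j :: real))"
  using prod.atLeastLessThan_concat[of a m n f] by simp

lemma prod_const_ivl:
  assumes "\<And>j. a \<le> j \<Longrightarrow> j < b \<Longrightarrow> f j = c"
  shows "(\<Prod>j\<in>{a..<b}. f j) = (c :: real) ^ (b - a)"
proof -
  have "(\<Prod>j\<in>{a..<b}. f j) = (\<Prod>j\<in>{a..<b}. c)" by (rule prod.cong) (use assms in auto)
  then show ?thesis by simp
qed

lemma prod_C_region:
  assumes "PP t + RR t \<le> k" "k \<le> QQ t"
  shows "(\<Prod>j\<in>{PP t..<k}. real (wS S j)) = (if nn t \<in> S then 2 else 1) ^ RR t"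
proof -
  have "(\<Prod>j\<in>{PP t..<k}. real (wS S j)) =
        (\<Prod>j\<in>{PP t..<PP t + RR t}. real (wS S j)) * (\<Prod>j\<in>{PP t + RR t..<k}. real (wS S j))"
    using assms by (intro prod_split2) auto
  also have "(\<Prod>j\<in>{PP t..<PP t + RR t}. real (wS S j)) = (if nn t \<in> S then 2 else 1) ^ RR t"
    by (subst prod_const_ivl[of _ _ _ "if nn t \<in> S then 2 else 1"]) (auto simp: wS_H1)
  also have "(\<Prod>j\<in>{PP t + RR t..<k}. real (wS S j)) = 1"
    by (subst prod_const_ivl[of _ _ _ 1]) (use assms in \<open>auto simp: wS_C\<close>)
  finally show ?thesis by simp
qed

lemma prod_block: "(\<Prod>j\<in>{PP t..<PP (Suc t)}. real (wS S j)) = 2 ^ RR t"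
proof -
  have "(\<Prod>j\<in>{PP t..<PP (Suc t)}. real (wS S j)) =
        (\<Prod>j\<in>{PP t..<QQ t}. real (wS S j)) * (\<Prod>j\<in>{QQ t..<PP (Suc t)}. real (wS S j))"
    using QQ_ge[of t] QQ_less[of t] by (intro prod_split2) auto
  also have "(\<Prod>j\<in>{PP t..<QQ t}. real (wS S j)) = (if nn t \<in> S then 2 else 1) ^ RR t"
    using QQ_ge[of t] by (intro prod_C_region) auto
  also have "(\<Prod>j\<in>{QQ t..<PP (Suc t)}. real (wS S j)) = (if nn t \<in> S then 1 else 2) ^ RR t"
    by (subst prod_const_ivl[of _ _ _ "if nn t \<in> S then 1 else 2"]) (auto simp: wS_H2 PP_Suc')
  finally show ?thesis by (simp add: power_mult_distrib[symmetric])
qed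

lemma prod_PP: "(\<Prod>j<PP t. real (wS S j)) = 2 ^ TT t"
proof (induction t)
  case 0 then show ?case by (simp add: TT_def)
next
  case (Suc t)
  have "(\<Prod>j<PP (Suc t). real (wS S j)) = (\<Prod>j<PP t. real (wS S j)) * (\<Prod>j\<in>{PP t..<PP (Suc t)}. real (wS S j))"
    by (rule prod_split) (rule less_imp_le[OF PP_less])
  also have "\<dots> = 2 ^ TT t * 2 ^ RR t" using Suc prod_block by simp
  finally show ?case by (simp add: TT_def power_add)
qed

lemma prod_C:
  assumes "PP t + RR t \<le> k" "k \<le> QQ t"
  shows "(\<Prod>j<k. real (wS S j)) = 2 ^ TT t * (if nn t \<in> S then 2 ^ RR t else 1)"
proof -
  have "(\<Prod>j<k. real (wS S j)) = (\<Prod>j<PP t. real (wS S j)) * (\<Prod>j\<in>{PP t..<k}. real (wS S j))"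
    using assms by (intro prod_split) auto
  then show ?thesis using prod_PP prod_C_region[OF assms] by simp
qed



definition Yv :: "nat \<Rightarrow> real" where
  "Yv p = (let t = stg p in if PP t + RR t \<le> p \<and> p < QQ t
     then qv t (p - (PP t + RR t)) / 2 ^ (TT t + RR t) else 0)"

definition yS :: "nat set \<Rightarrow> nat \<Rightarrow> real" where
  "yS S p = (if nn (stg p) \<in> S then 0 else Yv p)"

lemma Yv_C: assumes "i < LL t" shows "Yv (PP t + RR t + i) = qv t i / 2 ^ (TT t + RR t)"
proof -
  have "stg (PP t + RR t + i) = t" using assms QQ_less[of t] by (intro stg_eq) (auto simp: QQ_def)
  then show ?thesis using assms by (simp add: Yv_def Let_def QQ_def)
qed

lemma Yv_zero: assumes "PP t \<le> p" "p < PP (Suc t)" "\<not> (PP t + RR t \<le> p \<and> p < QQ t)"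
  shows "Yv p = 0"
proof -
  have "stg p = t" using assms by (intro stg_eq) auto
  then show ?thesis using assms by (auto simp: Yv_def Let_def)
qed

lemma sum_qv_le: "(\<Sum>i<LL t. \<bar>qv t i\<bar>) \<le> real (MM t)"
  unfolding MM_def by (rule real_nat_ceiling_ge)

lemma MM_le: "real (MM t) \<le> 2 ^ MM t"
proof -
  have "MM t < 2 ^ MM t" by (rule less_exp)
  then have "real (MM t) < real (2 ^ MM t)" by linarith
  then show ?thesis by simp
qed

lemma qv_le: assumes "i < LL t" shows "\<bar>qv t i\<bar> \<le> 2 ^ RR t"
proof -
  have "\<bar>qv t i\<bar> \<le> (\<Sum>i<LL t. \<bar>qv t i\<bar>)"
    using assms by (intro member_le_sum) auto
  also have "\<dots> \<le> 2 ^ MM t" using sum_qv_le MM_le order_trans by blast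
  also have "\<dots> \<le> 2 ^ RR t" by (intro power_increasing) (auto simp: RR_def)
  finally show ?thesis .
qed

lemma Yv_le1: "\<bar>Yv p\<bar> \<le> 1"
proof -
  define t where "t = stg p"
  show ?thesis
  proof (cases "PP t + RR t \<le> p \<and> p < QQ t")
    case True
    then have i: "p - (PP t + RR t) < LL t" by (auto simp: QQ_def)
    have "\<bar>Yv p\<bar> = \<bar>qv t (p - (PP t + RR t))\<bar> / 2 ^ (TT t + RR t)"
      using True by (simp add: Yv_def Let_def t_def)
    also have "\<dots> \<le> 2 ^ RR t / 2 ^ (TT t + RR t)"
      by (intro divide_right_mono qv_le i) auto
    also have "\<dots> \<le> 1" by (simp add: power_add)
    finally show ?thesis .
  next
    case False then show ?thesis by (auto simp: Yv_def Let_def t_def)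
  qed
qed

lemma yS_le: "\<bar>yS S p\<bar> \<le> \<bar>Yv p\<bar>" by (simp add: yS_def)

lemma sum_shift0: fixes f :: "nat \<Rightarrow> 'a::comm_monoid_add" shows "(\<Sum>p\<in>{a..<a+L}. f p) = (\<Sum>i<L. f (a + i))"
proof -
  have "(\<Sum>p\<in>{0+a..<L+a}. f p) = (\<Sum>i\<in>{0..<L}. f (i + a))" by (rule sum.shift_bounds_nat_ivl)
  then show ?thesis by (simp add: atLeast0LessThan add.commute)
qed

lemma Y_block: "(\<Sum>p\<in>{QQ t..<QQ (Suc t)}. \<bar>Yv p\<bar>) \<le> (1/2) ^ (PP (Suc t) + Suc t)"
proof -
  define u where "u = Suc t"
  define a where "a = PP u + RR u"
  have aQ: "QQ t \<le> a" "a \<le> QQ u" using QQ_less[of t] QQ_ge[of u] by (auto simp: a_def u_def)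
  have "(\<Sum>p\<in>{QQ t..<QQ u}. \<bar>Yv p\<bar>) = (\<Sum>p\<in>{QQ t..<a}. \<bar>Yv p\<bar>) + (\<Sum>p\<in>{a..<QQ u}. \<bar>Yv p\<bar>)"
    using aQ by (simp add: sum.atLeastLessThan_concat)
  also have "(\<Sum>p\<in>{QQ t..<a}. \<bar>Yv p\<bar>) = 0"
  proof (rule sum.neutral, rule ballI)
    fix p assume p: "p \<in> {QQ t..<a}"
    show "\<bar>Yv p\<bar> = 0"
    proof (cases "p < PP u")
      case True
      have "Yv p = 0" by (rule Yv_zero[of t]) (use True p QQ_ge[of t] in \<open>auto simp: u_def\<close>)
      then show ?thesis by simp
    next
      case False
      have "Yv p = 0" by (rule Yv_zero[of u]) (use False p QQ_less[of u] QQ_ge[of u] in \<open>auto simp: a_def\<close>)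
      then show ?thesis by simp
    qed
  qed
  also have "(\<Sum>p\<in>{a..<QQ u}. \<bar>Yv p\<bar>) = (\<Sum>i<LL u. \<bar>Yv (a + i)\<bar>)"
    using sum_shift0[of "\<lambda>p. \<bar>Yv p\<bar>" a "LL u"] by (simp add: QQ_def a_def)
  also have "\<dots> = (\<Sum>i<LL u. \<bar>qv u i\<bar> / 2 ^ (TT u + RR u))"
    by (rule sum.cong) (auto simp: a_def Yv_C)
  also have "\<dots> = (\<Sum>i<LL u. \<bar>qv u i\<bar>) / 2 ^ (TT u + RR u)"
    by (simp add: sum_divide_distrib)
  also have "\<dots> \<le> 2 ^ MM u / 2 ^ (TT u + RR u)"
    using order_trans[OF sum_qv_le[of u] MM_le[of u]] by (intro divide_right_mono) auto
  also have "\<dots> \<le> 2 ^ MM u / 2 ^ RR u"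
    by (intro divide_left_mono power_increasing) auto
  also have "\<dots> = (1/2) ^ (PP u + u + 1)"
    by (simp add: RR_def power_add power_divide field_simps)
  also have "\<dots> \<le> (1/2) ^ (PP u + u)" by (intro power_decreasing) auto
  finally show ?thesis by (simp add: u_def)
qed



lemma block_sum:
  fixes f c :: "nat \<Rightarrow> real" and Q :: "nat \<Rightarrow> nat"
  assumes f0: "\<And>p. 0 \<le> f p" and Qs: "\<And>t. Q t < Q (Suc t)"
    and B: "\<And>t. (\<Sum>p\<in>{Q t..<Q (Suc t)}. f p) \<le> c t" and sc: "summable c"
  shows "summable (\<lambda>i. f (i + Q K)) \<and> (\<Sum>i. f (i + Q K)) \<le> (\<Sum>i. c (i + K))"
proof -
  have c0: "0 \<le> c t" for t
  proof -
    have "0 \<le> (\<Sum>p\<in>{Q t..<Q (Suc t)}. f p)" using f0 by (intro sum_nonneg) auto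
    then show ?thesis using B[of t] by linarith
  qed
  have Qn: "Q K + n \<le> Q (K + n)" for n
  proof (induction n)
    case 0 then show ?case by simp
  next
    case (Suc n) then show ?case using Qs[of "K + n"] by simp
  qed
  have blocks: "(\<Sum>p\<in>{Q K..<Q (K+n)}. f p) = (\<Sum>t<n. \<Sum>p\<in>{Q (K+t)..<Q (K + Suc t)}. f p)" for n
  proof (induction n)
    case 0 then show ?case by simp
  next
    case (Suc n)
    have "(\<Sum>p\<in>{Q K..<Q (K + Suc n)}. f p) = (\<Sum>p\<in>{Q K..<Q (K+n)}. f p) + (\<Sum>p\<in>{Q (K+n)..<Q (K + Suc n)}. f p)"
      using Qn[of n] Qs[of "K+n"] by (intro sum.atLeastLessThan_concat[symmetric]) auto
    then show ?case using Suc by simp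
  qed
  have sc': "summable (\<lambda>i. c (i + K))" using sc by simp
  have part: "(\<Sum>i<n. f (i + Q K)) \<le> (\<Sum>i. c (i + K))" for n
  proof -
    have "(\<Sum>i<n. f (i + Q K)) = (\<Sum>p\<in>{Q K..<Q K + n}. f p)"
      using sum_shift0[of f "Q K" n] by (simp add: add.commute)
    also have "\<dots> \<le> (\<Sum>p\<in>{Q K..<Q (K+n)}. f p)"
      using Qn[of n] f0 by (intro sum_mono2) auto
    also have "\<dots> \<le> (\<Sum>t<n. c (t + K))"
      unfolding blocks using B by (intro sum_mono) (simp add: add.commute)
    also have "\<dots> \<le> (\<Sum>i. c (i + K))"
      by (rule sum_le_suminf[OF sc']) (use c0 in auto)
    finally show ?thesis .
  qed
  have "summable (\<lambda>i. f (i + Q K))" by (rule summableI_nonneg_bounded[OF f0 part])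
  moreover have "(\<Sum>i. f (i + Q K)) \<le> (\<Sum>i. c (i + K))" by (rule suminf_le_const[OF calculation part])
  ultimately show ?thesis by simp
qed

definition cY :: "nat \<Rightarrow> real" where "cY t = (1/2) ^ (PP (Suc t) + Suc t)"

lemma summable_cY: "summable cY"
proof (rule summable_le_nonneg[of _ "\<lambda>t. (1/2) ^ t"])
  show "summable (\<lambda>t. (1/2::real) ^ t)" by (rule summable_geometric) simp
  fix t show "0 \<le> cY t" by (simp add: cY_def)
  show "cY t \<le> (1/2) ^ t" unfolding cY_def by (intro power_decreasing) auto
qed

lemma Y_tail: "summable (\<lambda>i. \<bar>Yv (i + QQ K)\<bar>) \<and> (\<Sum>i. \<bar>Yv (i + QQ K)\<bar>) \<le> (\<Sum>i. cY (i + K))"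
proof (rule block_sum[of "\<lambda>p. \<bar>Yv p\<bar>" QQ cY])
  fix t show "(\<Sum>p\<in>{QQ t..<QQ (Suc t)}. \<bar>Yv p\<bar>) \<le> cY t" unfolding cY_def by (rule Y_block)
qed (auto simp: QQ_strict summable_cY)

lemma Y_summable: "summable (\<lambda>p. \<bar>Yv p\<bar>)"
  using Y_tail[of 0] summable_iff_shift by blast

lemma geo_tail: "(\<lambda>i. (1/2::real) ^ Suc (i + K)) sums ((1/2) ^ K)"
proof -
  have "(\<lambda>i. (1/2::real) ^ i) sums (1 / (1 - 1/2))" by (rule geometric_sums) simp
  then have "(\<lambda>i. (1/2::real) ^ Suc K * (1/2) ^ i) sums ((1/2) ^ Suc K * (1 / (1 - 1/2)))"
    by (rule sums_mult)
  moreover have "(1/2::real) ^ Suc K * (1 / (1 - 1/2)) = (1/2) ^ K" by simp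
  moreover have "(\<lambda>i. (1/2::real) ^ Suc K * (1/2) ^ i) = (\<lambda>i. (1/2::real) ^ Suc (i + K))"
    by (simp add: power_add mult_ac)
  ultimately show ?thesis by simp
qed

lemma Y_tail_bound:
  assumes "N \<le> PP (Suc K)"
  shows "2 ^ N * (\<Sum>i. \<bar>Yv (i + QQ K)\<bar>) \<le> (1/2) ^ K"
proof -
  have sc: "summable (\<lambda>i. cY (i + K))" using summable_cY by simp
  have le: "2 ^ N * cY (i + K) \<le> (1/2::real) ^ Suc (i + K)" for i
  proof -
    define m where "m = PP (Suc (i + K))"
    have "N \<le> m" unfolding m_def using assms PP_mono[of "Suc K" "Suc (i + K)"] by simp
    then have "(2::real) ^ N \<le> 2 ^ m" by (intro power_increasing) auto
    then have "(2::real) ^ N * (1/2) ^ m \<le> 2 ^ m * (1/2) ^ m" by (intro mult_right_mono) auto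
    also have "\<dots> = 1" by (simp add: power_mult_distrib[symmetric])
    finally have "(2::real) ^ N * (1/2) ^ m \<le> 1" .
    then have "(2::real) ^ N * (1/2) ^ m * (1/2) ^ Suc (i + K) \<le> (1/2) ^ Suc (i + K)"
      by (intro mult_left_le_one_le) auto
    then show ?thesis unfolding cY_def m_def by (simp add: power_add mult.assoc)
  qed
  have "2 ^ N * (\<Sum>i. \<bar>Yv (i + QQ K)\<bar>) \<le> 2 ^ N * (\<Sum>i. cY (i + K))"
    using Y_tail[of K] by (intro mult_left_mono) auto
  also have "\<dots> = (\<Sum>i. 2 ^ N * cY (i + K))" using sc by (rule suminf_mult[symmetric])
  also have "\<dots> \<le> (\<Sum>i. (1/2::real) ^ Suc (i + K))"
    using le sc geo_tail by (intro suminf_le) (auto intro: summable_mult sums_summable)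
  also have "\<dots> = (1/2) ^ K" using geo_tail by (rule sums_unique[symmetric])
  finally show ?thesis .
qed

lemma Y_tail_bound0: "(\<Sum>i. \<bar>Yv (i + QQ K)\<bar>) \<le> (1/2) ^ K"
  using Y_tail_bound[of 0 K] by simp



lemma sq_le_abs: fixes x :: real assumes "\<bar>x\<bar> \<le> 1" shows "x\<^sup>2 \<le> \<bar>x\<bar>"
proof -
  have "x\<^sup>2 = \<bar>x\<bar> * \<bar>x\<bar>" by (simp add: power2_eq_square abs_mult[symmetric])
  also have "\<dots> \<le> \<bar>x\<bar> * 1" by (intro mult_left_mono assms) auto
  finally show ?thesis by simp
qed

lemma yS_l2: "yS S \<in> l2"
proof -
  have le: "(yS S p)\<^sup>2 \<le> \<bar>Yv p\<bar>" for p
    using sq_le_abs[of "yS S p"] yS_le[of S p] Yv_le1[of p] by linarith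
  have "summable (\<lambda>p. (yS S p)\<^sup>2)"
    by (rule summable_le_nonneg[OF _ le Y_summable]) simp
  then show ?thesis unfolding l2_def by simp
qed

lemma y_close:
  assumes agree: "\<forall>t\<le>K. (nn t \<in> S \<longleftrightarrow> nn t \<in> S')"
  shows "l2_norm (\<lambda>i. yS S' i - yS S i) \<le> sqrt ((1/2) ^ K)"
proof -
  define d where "d = (\<lambda>i. yS S' i - yS S i)"
  have dl2: "d \<in> l2" unfolding d_def by (rule l2_diff[OF yS_l2 yS_l2])
  then have sd: "summable (\<lambda>i. (d i)\<^sup>2)" by (simp add: l2_def)
  have d0: "d p = 0" if "p < QQ K" for p
  proof -
    have "stg p \<le> K" using that QQ_less[of K] by (intro stg_le) auto
    then show ?thesis using agree by (auto simp: d_def yS_def)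
  qed
  have dle: "\<bar>d p\<bar> \<le> \<bar>Yv p\<bar>" for p by (auto simp: d_def yS_def)
  have dsq: "(d p)\<^sup>2 \<le> \<bar>Yv p\<bar>" for p
    using sq_le_abs[of "d p"] dle[of p] Yv_le1[of p] by linarith
  have "(\<Sum>i. (d i)\<^sup>2) = (\<Sum>i. (d (i + QQ K))\<^sup>2) + (\<Sum>i<QQ K. (d i)\<^sup>2)"
    by (rule suminf_split_initial_segment[OF sd])
  also have "(\<Sum>i<QQ K. (d i)\<^sup>2) = 0" using d0 by simp
  also have "(\<Sum>i. (d (i + QQ K))\<^sup>2) \<le> (\<Sum>i. \<bar>Yv (i + QQ K)\<bar>)"
  proof -
    have "summable (\<lambda>i. (d (i + QQ K))\<^sup>2)" using sd summable_iff_shift[of "\<lambda>i. (d i)\<^sup>2" "QQ K"] by simp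
    then show ?thesis using dsq Y_tail[of K] by (intro suminf_le) auto
  qed
  also have "\<dots> \<le> (1/2) ^ K" by (rule Y_tail_bound0)
  finally have "(\<Sum>i. (d i)\<^sup>2) \<le> (1/2) ^ K" by simp
  then show ?thesis unfolding l2_norm_def d_def[symmetric] by (rule real_sqrt_le_mono)
qed

lemma HC_no: assumes "Sb \<subseteq> Sa" shows "yS Sa \<notin> HC (wS Sb)"
proof -
  have "l2_top closure_of {(bshift (wS Sb) ^^ k) (yS Sa) | k. True} \<noteq> l2"
  proof (rule closure_l2_not)
    fix z assume "z \<in> {(bshift (wS Sb) ^^ k) (yS Sa) | k. True}"
    then obtain k where zk: "z = (bshift (wS Sb) ^^ k) (yS Sa)" by blast
    have z0: "z 0 = (\<Prod>j<k. real (wS Sb j)) * yS Sa k"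
      unfolding zk bshift_pow by (simp add: atLeast0LessThan)
    show "\<bar>z 0\<bar> \<le> 1"
    proof (cases "yS Sa k = 0")
      case True then show ?thesis using z0 by simp
    next
      case False
      define t where "t = stg k"
      have nt: "nn t \<notin> Sa" using False by (auto simp: yS_def t_def)
      then have ntb: "nn t \<notin> Sb" using assms by auto
      have Yk: "yS Sa k = Yv k" using nt by (simp add: yS_def t_def)
      have C: "PP t + RR t \<le> k \<and> k < QQ t"
        using False Yk by (auto simp: Yv_def Let_def t_def split: if_splits)
      have Yv_k: "Yv k = qv t (k - (PP t + RR t)) / 2 ^ (TT t + RR t)"
        using C by (simp add: Yv_def Let_def t_def)
      have i: "k - (PP t + RR t) < LL t" using C by (auto simp: QQ_def)
      have P: "(\<Prod>j<k. real (wS Sb j)) = 2 ^ TT t"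
        using prod_C[of t k Sb] C ntb by simp
      have "\<bar>z 0\<bar> = 2 ^ TT t * \<bar>qv t (k - (PP t + RR t))\<bar> / 2 ^ (TT t + RR t)"
        using z0 P Yk Yv_k by (simp add: abs_mult)
      also have "\<dots> = \<bar>qv t (k - (PP t + RR t))\<bar> / 2 ^ RR t"
        by (simp add: power_add)
      also have "\<dots> \<le> 1" using qv_le[OF i] by simp
      finally show ?thesis .
    qed
  qed
  then show ?thesis unfolding HC_def by blast
qed



lemma HC_yes: assumes nb: "n \<in> Sb" and na: "n \<notin> Sa" shows "yS Sa \<in> HC (wS Sb)"
proof -
  define w where "w = wS Sb"
  define y where "y = yS Sa"
  define W where "W = (\<lambda>i. \<Prod>j<i. real (w j))"
  have W1: "1 \<le> W i" for i unfolding W_def w_def by (intro prod_ge_1 wS_ge1)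
  have "l2_top closure_of {(bshift w ^^ k) y | k. True} = l2"
  proof (rule closure_l2I)
    fix x :: "nat \<Rightarrow> real" and e :: real
    assume x: "x \<in> l2" and e: "e > 0"
    have sx: "summable (\<lambda>i. (x i)\<^sup>2)" using x by (simp add: l2_def)
    have "e\<^sup>2 / 8 > 0" using e by simp
    from suminf_exist_split[OF this sx] obtain L where
      L: "\<bar>\<Sum>i. (x (i + L))\<^sup>2\<bar> < e\<^sup>2 / 8" by auto
    define \<delta> where "\<delta> = e / (3 * (real L + 1))"
    have \<delta>0: "\<delta> > 0" using e by (simp add: \<delta>_def)
    have ex_r: "\<exists>r::rat. \<bar>real_of_rat r - W i * x i\<bar> < \<delta>" for i
    proof -
      obtain q where q: "q \<in> \<rat>" "W i * x i - \<delta> < q" "q < W i * x i + \<delta>"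
        using Rats_dense_in_real[of "W i * x i - \<delta>" "W i * x i + \<delta>"] \<delta>0 by auto
      from q(1) obtain r where "q = real_of_rat r" by (cases rule: Rats_cases)
      then show ?thesis using q by (intro exI[of _ r]) auto
    qed
    define rr where "rr = (\<lambda>i. SOME r::rat. \<bar>real_of_rat r - W i * x i\<bar> < \<delta>)"
    have rr: "\<bar>real_of_rat (rr i) - W i * x i\<bar> < \<delta>" for i
      unfolding rr_def by (rule someI_ex[OF ex_r])
    define qs where "qs = map rr [0..<L]"
    have "e\<^sup>2 / 4 > 0" using e by simp
    from real_arch_pow_inv[OF this, of "1/2"] obtain k0 where k0: "(1/2::real) ^ k0 < e\<^sup>2 / 4" by auto
    define s where "s = prod_encode (k0, prod_encode (n, to_nat qs))"
    have nns: "nn s = n" by (simp add: s_def nn_def)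
    have qqs: "qq s = qs" by (simp add: s_def qq_def)
    have LLs: "LL s = L" by (simp add: LL_def qqs qs_def)
    have qvs: "qv s i = real_of_rat (rr i)" if "i < L" for i
      using that by (simp add: qv_def qqs qs_def)
    have sk: "k0 \<le> s" unfolding s_def by (rule le_prod_encode_1)
    have hs: "(1/2::real) ^ s \<le> (1/2) ^ k0" using sk by (intro power_decreasing) auto
    define N where "N = PP s + RR s"
    define z where "z = (bshift w ^^ N) y"
    have zl2: "z \<in> l2" unfolding z_def w_def y_def by (intro bshift_l2 wS_le2 yS_l2)
    have zf: "z i = (\<Prod>j\<in>{i..<i+N}. real (w j)) * y (i + N)" for i
      unfolding z_def by (rule bshift_pow)
    have zlow: "\<bar>z i - x i\<bar> < \<delta>" if i: "i < L" for i
    proof -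
      have stg: "stg (i + N) = s"
        using i QQ_less[of s] by (intro stg_eq) (auto simp: N_def QQ_def LLs)
      have yv: "y (i + N) = qv s i / 2 ^ (TT s + RR s)"
        using Yv_C[of i s] i na stg by (simp add: y_def yS_def nns LLs N_def add.commute)
      have P1: "(\<Prod>j<i+N. real (w j)) = 2 ^ TT s * 2 ^ RR s"
        using prod_C[of s "i + N" Sb] i nb by (simp add: N_def QQ_def LLs nns w_def)
      have P2: "(\<Prod>j<i+N. real (w j)) = W i * (\<Prod>j\<in>{i..<i+N}. real (w j))"
        unfolding W_def by (rule prod_split) simp
      have Wp: "W i > 0" using W1[of i] by simp
      have "z i = (2 ^ TT s * 2 ^ RR s / W i) * (qv s i / 2 ^ (TT s + RR s))"
        using zf[of i] P1 P2 Wp yv by (simp add: field_simps)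
      also have "\<dots> = qv s i / W i" by (simp add: power_add)
      finally have zi: "z i = real_of_rat (rr i) / W i" using qvs i by simp
      have "\<bar>z i - x i\<bar> = \<bar>real_of_rat (rr i) - W i * x i\<bar> / W i"
        using Wp unfolding zi by (simp add: field_simps)
      also have "\<dots> \<le> \<bar>real_of_rat (rr i) - W i * x i\<bar> / 1"
        using W1[of i] by (intro divide_left_mono) auto
      finally show ?thesis using rr[of i] by simp
    qed
    have QQs: "QQ s = N + L" by (simp add: QQ_def N_def LLs)
    have zhigh: "\<bar>z (i + L)\<bar> \<le> 2 ^ N * \<bar>Yv (i + QQ s)\<bar>" for i
    proof -
      have "(\<Prod>j\<in>{i+L..<i+L+N}. real (w j)) \<le> (\<Prod>j\<in>{i+L..<i+L+N}. 2)"
        by (intro prod_mono) (auto simp: w_def wS_le2)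
      also have "\<dots> = 2 ^ N" by simp
      finally have p: "(\<Prod>j\<in>{i+L..<i+L+N}. real (w j)) \<le> 2 ^ N" .
      have p0: "0 \<le> (\<Prod>j\<in>{i+L..<i+L+N}. real (w j))" by (intro prod_nonneg) auto
      have "\<bar>z (i + L)\<bar> = (\<Prod>j\<in>{i+L..<i+L+N}. real (w j)) * \<bar>y (i + L + N)\<bar>"
        using zf[of "i + L"] p0 by (simp add: abs_mult)
      also have "\<dots> \<le> 2 ^ N * \<bar>Yv (i + L + N)\<bar>"
        using p p0 yS_le[of Sa "i + L + N"] unfolding y_def by (intro mult_mono) auto
      finally show ?thesis by (simp add: QQs add.commute add.left_commute)
    qed
    have NP: "N \<le> PP (Suc s)" using QQ_less[of s] QQ_ge[of s] by (simp add: N_def)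
    have YT: "summable (\<lambda>i. \<bar>Yv (i + QQ s)\<bar>)" using Y_tail[of s] by simp
    have YB: "2 ^ N * (\<Sum>i. \<bar>Yv (i + QQ s)\<bar>) \<le> (1/2) ^ s" by (rule Y_tail_bound[OF NP])
    have sz: "summable (\<lambda>i. \<bar>z (i + L)\<bar>)"
      by (rule summable_le_nonneg[OF _ zhigh summable_mult[OF YT]]) simp
    have szs: "(\<Sum>i. \<bar>z (i + L)\<bar>) \<le> (1/2) ^ s"
    proof -
      have "(\<Sum>i. \<bar>z (i + L)\<bar>) \<le> (\<Sum>i. 2 ^ N * \<bar>Yv (i + QQ s)\<bar>)"
        by (rule suminf_le[OF zhigh sz summable_mult[OF YT]])
      also have "\<dots> = 2 ^ N * (\<Sum>i. \<bar>Yv (i + QQ s)\<bar>)" by (rule suminf_mult[OF YT])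
      finally show ?thesis using YB by linarith
    qed
    have z1: "\<bar>z (i + L)\<bar> \<le> 1" for i
    proof -
      have "(\<Sum>j\<in>{i}. \<bar>z (j + L)\<bar>) \<le> (\<Sum>j. \<bar>z (j + L)\<bar>)"
        by (rule sum_le_suminf[OF sz]) auto
      moreover have "(1/2::real) ^ s \<le> 1" by (intro power_le_one) auto
      ultimately show ?thesis using szs by simp
    qed
    define D where "D = (\<lambda>i. z i - x i)"
    have Dl2: "D \<in> l2" unfolding D_def by (rule l2_diff[OF x zl2])
    then have sD: "summable (\<lambda>i. (D i)\<^sup>2)" by (simp add: l2_def)
    have sDL: "summable (\<lambda>i. (D (i + L))\<^sup>2)" using sD summable_iff_shift[of "\<lambda>i. (D i)\<^sup>2" L] by simp
    have sxL: "summable (\<lambda>i. (x (i + L))\<^sup>2)" using sx summable_iff_shift[of "\<lambda>i. (x i)\<^sup>2" L] by simp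
    have part1: "(\<Sum>i<L. (D i)\<^sup>2) \<le> e\<^sup>2 / 9"
    proof -
      have "(\<Sum>i<L. (D i)\<^sup>2) \<le> (\<Sum>i<L. \<delta>\<^sup>2)"
      proof (rule sum_mono)
        fix i assume "i \<in> {..<L}"
        then have "\<bar>D i\<bar> < \<delta>" using zlow by (simp add: D_def)
        then have "\<bar>D i\<bar>\<^sup>2 \<le> \<delta>\<^sup>2" by (intro power_mono) auto
        then show "(D i)\<^sup>2 \<le> \<delta>\<^sup>2" by simp
      qed
      also have "\<dots> = real L * \<delta>\<^sup>2" by simp
      also have "\<dots> \<le> (real L + 1) * \<delta>\<^sup>2" by (intro mult_right_mono) auto
      also have "\<dots> = ((real L + 1) * \<delta>) * \<delta>" by (simp add: power2_eq_square)
      also have "(real L + 1) * \<delta> = e / 3"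
      proof -
        have h: "real L + 1 \<noteq> 0" "3 * real L + 3 \<noteq> 0" by linarith+
        show ?thesis unfolding \<delta>_def using h by (simp add: field_simps)
      qed
      also have "e / 3 * \<delta> \<le> e / 3 * (e / 3)"
      proof (intro mult_left_mono)
        show "\<delta> \<le> e / 3" unfolding \<delta>_def using e by (intro divide_left_mono) auto
      qed (use e in auto)
      also have "\<dots> = e\<^sup>2 / 9" by (simp add: power2_eq_square)
      finally show ?thesis .
    qed
    have Dsq: "(D (i + L))\<^sup>2 \<le> 2 * \<bar>z (i + L)\<bar> + 2 * (x (i + L))\<^sup>2" for i
    proof -
      have "(D (i + L))\<^sup>2 = 2 * (z (i + L))\<^sup>2 + 2 * (x (i + L))\<^sup>2 - (z (i + L) + x (i + L))\<^sup>2"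
        by (simp add: D_def power2_eq_square algebra_simps)
      moreover have "0 \<le> (z (i + L) + x (i + L))\<^sup>2" by simp
      moreover have "(z (i + L))\<^sup>2 \<le> \<bar>z (i + L)\<bar>" by (rule sq_le_abs[OF z1])
      ultimately show ?thesis by linarith
    qed
    have part2: "(\<Sum>i. (D (i + L))\<^sup>2) \<le> 2 * (1/2) ^ s + 2 * (e\<^sup>2 / 8)"
    proof -
      have s2: "summable (\<lambda>i. 2 * \<bar>z (i + L)\<bar> + 2 * (x (i + L))\<^sup>2)"
        by (intro summable_add summable_mult sz sxL)
      have "(\<Sum>i. (D (i + L))\<^sup>2) \<le> (\<Sum>i. 2 * \<bar>z (i + L)\<bar> + 2 * (x (i + L))\<^sup>2)"
        by (rule suminf_le[OF Dsq sDL s2])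
      also have "\<dots> = 2 * (\<Sum>i. \<bar>z (i + L)\<bar>) + 2 * (\<Sum>i. (x (i + L))\<^sup>2)"
        using sz sxL by (simp add: suminf_add[symmetric] suminf_mult summable_mult)
      also have "\<dots> \<le> 2 * (1/2) ^ s + 2 * (e\<^sup>2 / 8)"
        using szs L by (intro add_mono) auto
      finally show ?thesis .
    qed
    have "(\<Sum>i. (D i)\<^sup>2) = (\<Sum>i. (D (i + L))\<^sup>2) + (\<Sum>i<L. (D i)\<^sup>2)"
      by (rule suminf_split_initial_segment[OF sD])
    also have "\<dots> < e\<^sup>2"
      using part1 part2 hs k0 \<open>e\<^sup>2 / 4 > 0\<close> by linarith
    finally have "(\<Sum>i. (D i)\<^sup>2) < e\<^sup>2" .
    then have "sqrt (\<Sum>i. (D i)\<^sup>2) < sqrt (e\<^sup>2)" by (rule real_sqrt_less_mono)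
    then have "l2_norm (\<lambda>i. z i - x i) < e" using e by (simp add: l2_norm_def D_def)
    moreover have "z \<in> {(bshift w ^^ k) y | k. True}" unfolding z_def by blast
    ultimately show "\<exists>z\<in>{(bshift w ^^ k) y | k. True}. z \<in> l2 \<and> l2_norm (\<lambda>i. z i - x i) < e"
      using zl2 by blast
  qed
  then show ?thesis unfolding HC_def w_def y_def using yS_l2 by blast
qed



lemma topspace_cantor: "topspace (cantor_top A) = (\<Pi>\<^sub>E x\<in>A. UNIV)"
  by (simp add: cantor_top_def)

lemma cantor_cont:
  assumes into: "\<And>c. c \<in> topspace (cantor_top A) \<Longrightarrow> f c \<in> topspace Y"
    and loc: "\<And>c V. c \<in> topspace (cantor_top A) \<Longrightarrow> openin Y V \<Longrightarrow> f c \<in> V \<Longrightarrow>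
       \<exists>F. finite F \<and> (\<forall>c'\<in>topspace (cantor_top A). (\<forall>x\<in>F. c' x = c x) \<longrightarrow> f c' \<in> V)"
  shows "continuous_map (cantor_top A) Y f"
  unfolding continuous_map_eq_topcontinuous_at
proof
  fix c assume c: "c \<in> topspace (cantor_top A)"
  show "topcontinuous_at (cantor_top A) Y f c"
    unfolding topcontinuous_at_def
  proof (intro conjI allI impI c)
    show "f \<in> topspace (cantor_top A) \<rightarrow> topspace Y" using into by blast
    fix V assume V: "openin Y V \<and> f c \<in> V"
    then obtain F where F: "finite F" "\<forall>c'\<in>topspace (cantor_top A). (\<forall>x\<in>F. c' x = c x) \<longrightarrow> f c' \<in> V"
      using loc c by blast
    define S where "S = (\<lambda>x. if x \<in> F then {c x} else (UNIV :: bool set))"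
    define U where "U = (\<Pi>\<^sub>E x\<in>A. S x)"
    have "openin (cantor_top A) U"
      unfolding cantor_top_def U_def openin_PiE_gen
    proof (rule disjI2, intro conjI ballI)
      show "finite {i \<in> A. S i \<noteq> topspace (discrete_topology UNIV)}"
        by (rule finite_subset[OF _ F(1)]) (auto simp: S_def)
    qed (auto simp: S_def)
    moreover have "c \<in> U" using c by (auto simp: U_def S_def topspace_cantor PiE_iff)
    moreover have "\<forall>y\<in>U. f y \<in> V"
    proof
      fix c' assume c': "c' \<in> U"
      have c'top: "c' \<in> topspace (cantor_top A)" using c' by (auto simp: U_def topspace_cantor PiE_iff)
      have "\<forall>x\<in>F. c' x = c x"
      proof
        fix x assume x: "x \<in> F"
        show "c' x = c x"
        proof (cases "x \<in> A")
          case True then show ?thesis using c' x by (auto simp: U_def S_def PiE_iff)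
        next
          case False then show ?thesis using c'top c by (auto simp: topspace_cantor PiE_iff extensional_def)
        qed
      qed
      then show "f c' \<in> V" using F(2) c'top by blast
    qed
    ultimately show "\<exists>U. openin (cantor_top A) U \<and> c \<in> U \<and> (\<forall>y\<in>U. f y \<in> V)" by blast
  qed
qed

lemma compact_cantor: "compact_space (cantor_top A)"
  unfolding cantor_top_def compact_space_product_topology by (simp add: compact_space_discrete_topology)

lemma set_of_char_sub: "set_of_char A c \<subseteq> A" by (auto simp: set_of_char_def)

lemma set_of_char_image: "set_of_char A ` topspace (cantor_top A) = {a. a \<subseteq> A}"
proof
  show "set_of_char A ` topspace (cantor_top A) \<subseteq> {a. a \<subseteq> A}" by (rule image_subsetI) (simp add: set_of_char_sub)
  show "{a. a \<subseteq> A} \<subseteq> set_of_char A ` topspace (cantor_top A)"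
  proof
    fix a assume a: "a \<in> {a. a \<subseteq> A}"
    have r: "restrict (\<lambda>x. x \<in> a) A \<in> topspace (cantor_top A)" unfolding cantor_top_def topspace_product_topology by auto
    have s: "set_of_char A (restrict (\<lambda>x. x \<in> a) A) = a" using a by (auto simp: set_of_char_def)
    show "a \<in> set_of_char A ` topspace (cantor_top A)" by (rule image_eqI[of a "set_of_char A" "restrict (\<lambda>x. x \<in> a) A", OF sym[OF s] r])
  qed
qed

lemma set_of_char_inj: "inj_on (set_of_char A) (topspace (cantor_top A))"
proof
  fix c c' assume c: "c \<in> topspace (cantor_top A)" and c': "c' \<in> topspace (cantor_top A)"
    and eq: "set_of_char A c = set_of_char A c'"
  show "c = c'"
  proof
    fix x show "c x = c' x"
    proof (cases "x \<in> A")
      case True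
      then have "c x \<longleftrightarrow> x \<in> set_of_char A c" "c' x \<longleftrightarrow> x \<in> set_of_char A c'"
        by (auto simp: set_of_char_def)
      then show ?thesis using eq by simp
    next
      case False then show ?thesis using c c' by (auto simp: topspace_cantor PiE_iff extensional_def)
    qed
  qed
qed

lemma soc_agree:
  assumes "\<And>x. x \<in> A \<Longrightarrow> e x = m \<Longrightarrow> c' x = c x"
  shows "m \<in> e ` set_of_char A c \<longleftrightarrow> m \<in> e ` set_of_char A c'"
proof
  assume "m \<in> e ` set_of_char A c"
  then obtain x where x: "x \<in> A" "c x" "m = e x" by (auto simp: set_of_char_def)
  then have "c' x" using assms[of x] by simp
  then show "m \<in> e ` set_of_char A c'" using x by (auto simp: set_of_char_def)
next
  assume "m \<in> e ` set_of_char A c'"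
  then obtain x where x: "x \<in> A" "c' x" "m = e x" by (auto simp: set_of_char_def)
  then have "c x" using assms[of x] by simp
  then show "m \<in> e ` set_of_char A c" using x by (auto simp: set_of_char_def)
qed

lemma wS_local: "(nn (stg j) \<in> S \<longleftrightarrow> nn (stg j) \<in> S') \<Longrightarrow> wS S j = wS S' j"
  by (simp add: wS_def Let_def)


theorem lemma7:
  fixes A :: "'a set"
  assumes "countable A"
  shows "\<exists>(y :: 'a set \<Rightarrow> (nat \<Rightarrow> real)) (w :: 'a set \<Rightarrow> (nat \<Rightarrow> nat)).
           (\<forall>a. a \<subseteq> A \<longrightarrow> y a \<in> l2 \<and> w a \<in> topspace weight_top) \<and>
           (\<forall>a b. a \<subseteq> A \<longrightarrow> b \<subseteq> A \<longrightarrow> (y a \<in> HC (w b) \<longleftrightarrow> \<not> b \<subseteq> a)) \<and>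
           homeomorphic_map (cantor_top A) (subtopology l2_top (y ` {a. a \<subseteq> A}))
             (\<lambda>c. y (set_of_char A c)) \<and>
           homeomorphic_map (cantor_top A) (subtopology weight_top (w ` {a. a \<subseteq> A}))
             (\<lambda>c. w (set_of_char A c))"
proof -
  define e where "e = to_nat_on A"
  have inj: "inj_on e A" unfolding e_def using assms by (rule inj_on_to_nat_on)
  define y where "y = (\<lambda>a. yS (e ` a))"
  define w where "w = (\<lambda>a. wS (e ` a))"
  have P1: "\<forall>a. a \<subseteq> A \<longrightarrow> y a \<in> l2 \<and> w a \<in> topspace weight_top"
  proof (intro allI impI conjI)
    fix a show "y a \<in> l2" by (simp add: y_def yS_l2)
    show "w a \<in> topspace weight_top" using wS_12[of "e ` a"] by (simp add: w_def weight_top_def PiE_UNIV_domain Pi_iff)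
  qed
  have P2: "\<forall>a b. a \<subseteq> A \<longrightarrow> b \<subseteq> A \<longrightarrow> (y a \<in> HC (w b) \<longleftrightarrow> \<not> b \<subseteq> a)"
  proof (intro allI impI)
    fix a b assume a: "a \<subseteq> A" and b: "b \<subseteq> A"
    show "y a \<in> HC (w b) \<longleftrightarrow> \<not> b \<subseteq> a"
    proof
      assume "y a \<in> HC (w b)"
      then show "\<not> b \<subseteq> a" using HC_no[of "e ` b" "e ` a"] by (auto simp: y_def w_def)
    next
      assume "\<not> b \<subseteq> a"
      then obtain x where x: "x \<in> b" "x \<notin> a" by blast
      have "e x \<notin> e ` a"
      proof
        assume "e x \<in> e ` a"
        then obtain x' where "x' \<in> a" "e x = e x'" by blast
        then have "x = x'" using inj a b x by (meson inj_onD subsetD)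
        then show False using x \<open>x' \<in> a\<close> by simp
      qed
      then show "y a \<in> HC (w b)" using HC_yes[of "e x" "e ` b" "e ` a"] x by (auto simp: y_def w_def)
    qed
  qed
  have yinj: "a = a'" if h: "a \<subseteq> A" "a' \<subseteq> A" "y a = y a'" for a a'
  proof -
    have 1: "y a' \<in> HC (w a) \<longleftrightarrow> \<not> a \<subseteq> a'" using P2 h by blast
    have 2: "y a \<in> HC (w a) \<longleftrightarrow> \<not> a \<subseteq> a" using P2 h by blast
    have 3: "y a \<in> HC (w a') \<longleftrightarrow> \<not> a' \<subseteq> a" using P2 h by blast
    have 4: "y a' \<in> HC (w a') \<longleftrightarrow> \<not> a' \<subseteq> a'" using P2 h by blast
    have "a \<subseteq> a'" using 1 2 h(3) by simp
    moreover have "a' \<subseteq> a" using 3 4 h(3) by simp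
    ultimately show ?thesis by (rule subset_antisym)
  qed
  have winj: "a = a'" if h: "a \<subseteq> A" "a' \<subseteq> A" "w a = w a'" for a a'
  proof -
    have 1: "y a' \<in> HC (w a) \<longleftrightarrow> \<not> a \<subseteq> a'" using P2 h by blast
    have 2: "y a \<in> HC (w a) \<longleftrightarrow> \<not> a \<subseteq> a" using P2 h by blast
    have 3: "y a \<in> HC (w a') \<longleftrightarrow> \<not> a' \<subseteq> a" using P2 h by blast
    have 4: "y a' \<in> HC (w a') \<longleftrightarrow> \<not> a' \<subseteq> a'" using P2 h by blast
    have "a \<subseteq> a'" using 1 4 h(3) by simp
    moreover have "a' \<subseteq> a" using 2 3 h(3) by simp
    ultimately show ?thesis by (rule subset_antisym)
  qed
  have ycont: "continuous_map (cantor_top A) l2_top (\<lambda>c. y (set_of_char A c))"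
  proof (rule cantor_cont)
    fix c show "y (set_of_char A c) \<in> topspace l2_top" by (simp add: topspace_l2 y_def yS_l2)
  next
    fix c V assume c: "c \<in> topspace (cantor_top A)" and V: "openin l2_top V" "y (set_of_char A c) \<in> V"
    have "l2_open V" using V(1) by (simp add: openin_l2)
    then have "\<forall>x\<in>V. \<exists>e>0. \<forall>z\<in>l2. l2_norm (\<lambda>i. z i - x i) < e \<longrightarrow> z \<in> V"
      unfolding l2_open_def by (rule conjunct2)
    from bspec[OF this V(2)] obtain \<epsilon> where \<epsilon>: "\<epsilon> > 0" "\<forall>z\<in>l2. l2_norm (\<lambda>i. z i - y (set_of_char A c) i) < \<epsilon> \<longrightarrow> z \<in> V"
      by blast
    have "\<epsilon>\<^sup>2 > 0" using \<epsilon> by simp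
    from real_arch_pow_inv[OF this, of "1/2"] obtain K where K: "(1/2::real) ^ K < \<epsilon>\<^sup>2" by auto
    define F where "F = {x \<in> A. e x \<in> nn ` {..K}}"
    have "finite F" unfolding F_def
      using finite_vimage_IntI[of "nn ` {..K}" e A] inj by (simp add: Int_commute vimage_def Collect_conj_eq)
    moreover have "\<forall>c'\<in>topspace (cantor_top A). (\<forall>x\<in>F. c' x = c x) \<longrightarrow> y (set_of_char A c') \<in> V"
    proof (intro ballI impI)
      fix c' assume c': "c' \<in> topspace (cantor_top A)" and ag: "\<forall>x\<in>F. c' x = c x"
      have agree: "\<forall>t\<le>K. (nn t \<in> e ` set_of_char A c \<longleftrightarrow> nn t \<in> e ` set_of_char A c')"
      proof (intro allI impI)
        fix t assume t: "t \<le> K"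
        have "x \<in> F" if "x \<in> A" "e x = nn t" for x using that t by (auto simp: F_def)
        then show "nn t \<in> e ` set_of_char A c \<longleftrightarrow> nn t \<in> e ` set_of_char A c'"
          using ag by (intro soc_agree) auto
      qed
      have "l2_norm (\<lambda>i. y (set_of_char A c') i - y (set_of_char A c) i) \<le> sqrt ((1/2) ^ K)"
        unfolding y_def by (rule y_close[OF agree])
      also have "\<dots> < sqrt (\<epsilon>\<^sup>2)" using K by (rule real_sqrt_less_mono)
      also have "\<dots> = \<epsilon>" using \<epsilon> by simp
      finally show "y (set_of_char A c') \<in> V" using \<epsilon>(2) by (simp add: y_def yS_l2)
    qed
    ultimately show "\<exists>F. finite F \<and> (\<forall>c'\<in>topspace (cantor_top A). (\<forall>x\<in>F. c' x = c x) \<longrightarrow> y (set_of_char A c') \<in> V)"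
      by blast
  qed
  have wcont: "continuous_map (cantor_top A) weight_top (\<lambda>c. w (set_of_char A c))"
    unfolding weight_top_def continuous_map_componentwise_UNIV
  proof
    fix j
    show "continuous_map (cantor_top A) (discrete_topology {1, 2}) (\<lambda>c. w (set_of_char A c) j)"
    proof (rule cantor_cont)
      fix c show "w (set_of_char A c) j \<in> topspace (discrete_topology {1, 2})"
        using wS_12 by (simp add: w_def)
    next
      fix c V assume c: "c \<in> topspace (cantor_top A)" and V: "w (set_of_char A c) j \<in> V"
      define F where "F = {x \<in> A. e x = nn (stg j)}"
      have "finite F"
      proof (cases "F = {}")
        case False
        then obtain x where x: "x \<in> F" by blast
        have "F = {x}" using x inj by (auto simp: F_def inj_on_def)
        then show ?thesis by simp
      qed simp
      moreover have "\<forall>c'\<in>topspace (cantor_top A). (\<forall>x\<in>F. c' x = c x) \<longrightarrow> w (set_of_char A c') j \<in> V"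
      proof (intro ballI impI)
        fix c' assume c': "c' \<in> topspace (cantor_top A)" and ag: "\<forall>x\<in>F. c' x = c x"
        have "nn (stg j) \<in> e ` set_of_char A c \<longleftrightarrow> nn (stg j) \<in> e ` set_of_char A c'"
          using ag by (intro soc_agree) (auto simp: F_def)
        then have "w (set_of_char A c') j = w (set_of_char A c) j"
          unfolding w_def by (intro wS_local) simp
        then show "w (set_of_char A c') j \<in> V" using V by simp
      qed
      ultimately show "\<exists>F. finite F \<and> (\<forall>c'\<in>topspace (cantor_top A). (\<forall>x\<in>F. c' x = c x) \<longrightarrow> w (set_of_char A c') j \<in> V)"
        by blast
    qed
  qed
  have Hw: "Hausdorff_space weight_top"
    unfolding weight_top_def by (simp add: Hausdorff_space_product_topology)
  have H3: "homeomorphic_map (cantor_top A) (subtopology l2_top (y ` {a. a \<subseteq> A})) (\<lambda>c. y (set_of_char A c))"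
  proof (rule continuous_imp_homeomorphic_map)
    show "continuous_map (cantor_top A) (subtopology l2_top (y ` {a. a \<subseteq> A})) (\<lambda>c. y (set_of_char A c))"
      by (intro continuous_map_into_subtopology ycont funcsetI imageI CollectI set_of_char_sub)
    show "compact_space (cantor_top A)" by (rule compact_cantor)
    show "Hausdorff_space (subtopology l2_top (y ` {a. a \<subseteq> A}))"
      by (intro Hausdorff_space_subtopology Hausdorff_l2)
    have "(\<lambda>c. y (set_of_char A c)) ` topspace (cantor_top A) = y ` (set_of_char A ` topspace (cantor_top A))"
      by (rule image_image[symmetric])
    then have "(\<lambda>c. y (set_of_char A c)) ` topspace (cantor_top A) = y ` {a. a \<subseteq> A}"
      by (simp only: set_of_char_image)
    then show "(\<lambda>c. y (set_of_char A c)) ` topspace (cantor_top A) = topspace (subtopology l2_top (y ` {a. a \<subseteq> A}))"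
      using P1 by (auto simp: topspace_l2)
    show "inj_on (\<lambda>c. y (set_of_char A c)) (topspace (cantor_top A))"
    proof (rule inj_onI)
      fix c c' assume c: "c \<in> topspace (cantor_top A)" "c' \<in> topspace (cantor_top A)"
        and eq: "y (set_of_char A c) = y (set_of_char A c')"
      have "set_of_char A c = set_of_char A c'" using yinj[OF set_of_char_sub set_of_char_sub eq] .
      then show "c = c'" using inj_onD[OF set_of_char_inj _ c(1) c(2)] by blast
    qed
  qed
  have H4: "homeomorphic_map (cantor_top A) (subtopology weight_top (w ` {a. a \<subseteq> A})) (\<lambda>c. w (set_of_char A c))"
  proof (rule continuous_imp_homeomorphic_map)
    show "continuous_map (cantor_top A) (subtopology weight_top (w ` {a. a \<subseteq> A})) (\<lambda>c. w (set_of_char A c))"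
      by (intro continuous_map_into_subtopology wcont funcsetI imageI CollectI set_of_char_sub)
    show "compact_space (cantor_top A)" by (rule compact_cantor)
    show "Hausdorff_space (subtopology weight_top (w ` {a. a \<subseteq> A}))"
      by (intro Hausdorff_space_subtopology Hw)
    have "(\<lambda>c. w (set_of_char A c)) ` topspace (cantor_top A) = w ` (set_of_char A ` topspace (cantor_top A))"
      by (rule image_image[symmetric])
    then have "(\<lambda>c. w (set_of_char A c)) ` topspace (cantor_top A) = w ` {a. a \<subseteq> A}"
      by (simp only: set_of_char_image)
    then show "(\<lambda>c. w (set_of_char A c)) ` topspace (cantor_top A) = topspace (subtopology weight_top (w ` {a. a \<subseteq> A}))"
      using P1 by auto
    show "inj_on (\<lambda>c. w (set_of_char A c)) (topspace (cantor_top A))"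
    proof (rule inj_onI)
      fix c c' assume c: "c \<in> topspace (cantor_top A)" "c' \<in> topspace (cantor_top A)"
        and eq: "w (set_of_char A c) = w (set_of_char A c')"
      have "set_of_char A c = set_of_char A c'" using winj[OF set_of_char_sub set_of_char_sub eq] .
      then show "c = c'" using inj_onD[OF set_of_char_inj _ c(1) c(2)] by blast
    qed
  qed
  show ?thesis
    apply (rule exI[of _ y], rule exI[of _ w])
    using P1 P2 H3 H4 by (intro conjI)
qed

end
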